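(* Let $\boldsymbol{A},\boldsymbol{B}\in\mathsf{ISL}$ and let $\mathbb{X},\mathbb{Y}$ be posets. (i) If $f\colon\boldsymbol{A}\to\boldsymbol{B}$ is a homomorphism, then $f_\ast\colon\boldsymbol{B}_\ast\rightharpoonup\boldsymbol{A}_\ast$ is a partial positive p-morphism. (ii) If $p\colon\mathbb{X}\rightharpoonup\mathbb{Y}$ is a partial positive p-morphism, then $\mathsf{Up}_{\mathsf{ISL}}(p)\colon\mathsf{Up}_{\mathsf{ISL}}(\mathbb{Y})\to\mathsf{Up}_{\mathsf{ISL}}(\mathbb{X})$ is a homomorphism.
   Context: $\mathsf{ISL}$ is the class of implicative semilattices $\langle A;\land,\to,1\rangle$: $\langle A;\land\rangle$ is a semilattice (order $a\le b$ iff $a\land b=a$) with maximum $1$ and $c\land a\le b\iff c\le a\to b$ for all $a,b,c$. A filter is a nonempty upset closed under $\land$; it is meet irreducible if proper and not the intersection of two filters both different from it; $\boldsymbol{A}_\ast$ is the poset of meet irreducible filters under inclusion. A partial function $p\colon X\rightharpoonup Y$ is a function from $\mathsf{dom}(p)\subseteq X$ to $Y$; between posets it is order preserving if $x\le z$ in $\mathsf{dom}(p)$ implies $p(x)\le p(z)$. An order preserving $p\colon\mathbb{X}\rightharpoonup\mathbb{Y}$ is a partial positive p-morphism if whenever $x\in\mathsf{dom}(p)$, $y\in Y$, $p(x)\le y$, there is $z\in\mathsf{dom}(p)$ with $x\le z$ and $y=p(z)$. For a homomorphism $f$, $f_\ast$ has domain $\{F\in\boldsymbol{B}_\ast: f^{-1}[F]\in\boldsymbol{A}_\ast\}$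 and $f_\ast(F)=f^{-1}[F]$. For a poset $\mathbb{X}$, $\mathsf{Up}_{\mathsf{ISL}}(\mathbb{X})=\langle\mathsf{Up}(\mathbb{X});\cap,\to,X\rangle$ with $\mathsf{Up}(\mathbb{X})$ the set of upsets and $U\to V=X\smallsetminus{\downarrow}(U\smallsetminus V)$; and $\mathsf{Up}_{\mathsf{ISL}}(p)(U)=X\smallsetminus{\downarrow}p^{-1}[Y\smallsetminus U]$. *)

theory Defs
  imports Main
begin

definition isl_le :: "('a \<Rightarrow> 'a \<Rightarrow> 'a) \<Rightarrow> 'a \<Rightarrow> 'a \<Rightarrow> bool" where
  "isl_le meet a b \<longleftrightarrow> meet a b = a"

definition is_isl :: "'a set \<Rightarrow> ('a \<Rightarrow> 'a \<Rightarrow> 'a) \<Rightarrow> ('a \<Rightarrow> 'a \<Rightarrow> 'a) \<Rightarrow> 'a \<Rightarrow> bool" where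
  "is_isl A meet imp one \<longleftrightarrow>
     one \<in> A \<and>
     (\<forall>a\<in>A. \<forall>b\<in>A. meet a b \<in> A \<and> imp a b \<in> A) \<and>
     (\<forall>a\<in>A. \<forall>b\<in>A. \<forall>c\<in>A. meet (meet a b) c = meet a (meet b c)) \<and>
     (\<forall>a\<in>A. \<forall>b\<in>A. meet a b = meet b a) \<and>
     (\<forall>a\<in>A. meet a a = a) \<and>
     (\<forall>a\<in>A. isl_le meet a one) \<and>
     (\<forall>a\<in>A. \<forall>b\<in>A. \<forall>c\<in>A. isl_le meet (meet c a) b \<longleftrightarrow> isl_le meet c (imp a b))"

definition isl_hom ::
  "'a set \<Rightarrow> ('a \<Rightarrow> 'a \<Rightarrow> 'a) \<Rightarrow> ('a \<Rightarrow> 'a \<Rightarrow> 'a) \<Rightarrow> 'a \<Rightarrow>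
   'b set \<Rightarrow> ('b \<Rightarrow> 'b \<Rightarrow> 'b) \<Rightarrow> ('b \<Rightarrow> 'b \<Rightarrow> 'b) \<Rightarrow> 'b \<Rightarrow> ('a \<Rightarrow> 'b) \<Rightarrow> bool" where
  "isl_hom A meetA impA oneA B meetB impB oneB f \<longleftrightarrow>
     (\<forall>a\<in>A. f a \<in> B) \<and>
     (\<forall>a\<in>A. \<forall>b\<in>A. f (meetA a b) = meetB (f a) (f b)) \<and>
     (\<forall>a\<in>A. \<forall>b\<in>A. f (impA a b) = impB (f a) (f b)) \<and>
     f oneA = oneB"

definition isl_filter :: "'a set \<Rightarrow> ('a \<Rightarrow> 'a \<Rightarrow> 'a) \<Rightarrow> 'a set \<Rightarrow> bool" where
  "isl_filter A meet F \<longleftrightarrow>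
     F \<subseteq> A \<and> F \<noteq> {} \<and>
     (\<forall>a\<in>F. \<forall>b\<in>A. isl_le meet a b \<longrightarrow> b \<in> F) \<and>
     (\<forall>a\<in>F. \<forall>b\<in>F. meet a b \<in> F)"

definition meet_irreducible_filter :: "'a set \<Rightarrow> ('a \<Rightarrow> 'a \<Rightarrow> 'a) \<Rightarrow> 'a set \<Rightarrow> bool" where
  "meet_irreducible_filter A meet F \<longleftrightarrow>
     isl_filter A meet F \<and> F \<noteq> A \<and>
     \<not> (\<exists>G H. isl_filter A meet G \<and> isl_filter A meet H \<and> G \<noteq> F \<and> H \<noteq> F \<and> F = G \<inter> H)"

definition mi_filters :: "'a set \<Rightarrow> ('a \<Rightarrow> 'a \<Rightarrow> 'a) \<Rightarrow> 'a set set" where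
  "mi_filters A meet = {F. meet_irreducible_filter A meet F}"

definition is_poset :: "'x set \<Rightarrow> ('x \<Rightarrow> 'x \<Rightarrow> bool) \<Rightarrow> bool" where
  "is_poset X le \<longleftrightarrow>
     (\<forall>x\<in>X. le x x) \<and>
     (\<forall>x\<in>X. \<forall>y\<in>X. le x y \<and> le y x \<longrightarrow> x = y) \<and>
     (\<forall>x\<in>X. \<forall>y\<in>X. \<forall>z\<in>X. le x y \<and> le y z \<longrightarrow> le x z)"

definition partial_fun :: "'x set \<Rightarrow> 'y set \<Rightarrow> ('x \<Rightarrow> 'y option) \<Rightarrow> bool" where
  "partial_fun X Y p \<longleftrightarrow> dom p \<subseteq> X \<and> ran p \<subseteq> Y"

definition partial_order_preserving ::
  "'x set \<Rightarrow> ('x \<Rightarrow> 'x \<Rightarrow> bool) \<Rightarrow> 'y set \<Rightarrow> ('y \<Rightarrow> 'y \<Rightarrow> bool) \<Rightarrow> ('x \<Rightarrow> 'y option) \<Rightarrow> bool" where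
  "partial_order_preserving X leX Y leY p \<longleftrightarrow>
     partial_fun X Y p \<and>
     (\<forall>x\<in>dom p. \<forall>z\<in>dom p. leX x z \<longrightarrow> leY (the (p x)) (the (p z)))"

definition partial_positive_pmorphism ::
  "'x set \<Rightarrow> ('x \<Rightarrow> 'x \<Rightarrow> bool) \<Rightarrow> 'y set \<Rightarrow> ('y \<Rightarrow> 'y \<Rightarrow> bool) \<Rightarrow> ('x \<Rightarrow> 'y option) \<Rightarrow> bool" where
  "partial_positive_pmorphism X leX Y leY p \<longleftrightarrow>
     partial_order_preserving X leX Y leY p \<and>
     (\<forall>x\<in>dom p. \<forall>y\<in>Y. leY (the (p x)) y \<longrightarrow>
        (\<exists>z\<in>dom p. leX x z \<and> y = the (p z)))"

definition isl_preimage :: "'a set \<Rightarrow> ('a \<Rightarrow> 'b) \<Rightarrow> 'b set \<Rightarrow> 'a set" where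
  "isl_preimage A f F = {a\<in>A. f a \<in> F}"

definition dual_map ::
  "'a set \<Rightarrow> ('a \<Rightarrow> 'a \<Rightarrow> 'a) \<Rightarrow> 'b set \<Rightarrow> ('b \<Rightarrow> 'b \<Rightarrow> 'b) \<Rightarrow> ('a \<Rightarrow> 'b) \<Rightarrow> 'b set \<Rightarrow> 'a set option" where
  "dual_map A meetA B meetB f F =
     (if F \<in> mi_filters B meetB \<and> isl_preimage A f F \<in> mi_filters A meetA
      then Some (isl_preimage A f F) else None)"

definition upsets :: "'x set \<Rightarrow> ('x \<Rightarrow> 'x \<Rightarrow> bool) \<Rightarrow> 'x set set" where
  "upsets X le = {U. U \<subseteq> X \<and> (\<forall>u\<in>U. \<forall>x\<in>X. le u x \<longrightarrow> x \<in> U)}"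

definition down_set :: "'x set \<Rightarrow> ('x \<Rightarrow> 'x \<Rightarrow> bool) \<Rightarrow> 'x set \<Rightarrow> 'x set" where
  "down_set X le S = {x\<in>X. \<exists>s\<in>S. le x s}"

definition up_imp :: "'x set \<Rightarrow> ('x \<Rightarrow> 'x \<Rightarrow> bool) \<Rightarrow> 'x set \<Rightarrow> 'x set \<Rightarrow> 'x set" where
  "up_imp X le U V = X - down_set X le (U - V)"

definition partial_preimage :: "('x \<Rightarrow> 'y option) \<Rightarrow> 'y set \<Rightarrow> 'x set" where
  "partial_preimage p S = {x\<in>dom p. the (p x) \<in> S}"

definition up_map ::
  "'x set \<Rightarrow> ('x \<Rightarrow> 'x \<Rightarrow> bool) \<Rightarrow> 'y set \<Rightarrow> ('x \<Rightarrow> 'y option) \<Rightarrow> 'y set \<Rightarrow> 'x set" where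
  "up_map X leX Y p U = X - down_set X leX (partial_preimage p (Y - U))"

end

theory Submission
  imports Defs
begin

locale isl_loc =
  fixes A :: "'a set" and m :: "'a \<Rightarrow> 'a \<Rightarrow> 'a" and i :: "'a \<Rightarrow> 'a \<Rightarrow> 'a" and one :: 'a
  assumes isl: "is_isl A m i one"
begin

lemma cl: "a \<in> A \<Longrightarrow> b \<in> A \<Longrightarrow> m a b \<in> A" "a \<in> A \<Longrightarrow> b \<in> A \<Longrightarrow> i a b \<in> A"
  using isl unfolding is_isl_def by auto

lemma assoc: "a \<in> A \<Longrightarrow> b \<in> A \<Longrightarrow> c \<in> A \<Longrightarrow> m (m a b) c = m a (m b c)"
  using isl unfolding is_isl_def by auto
lemma comm: "a \<in> A \<Longrightarrow> b \<in> A \<Longrightarrow> m a b = m b a"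
  using isl unfolding is_isl_def by auto
lemma idem: "a \<in> A \<Longrightarrow> m a a = a"
  using isl unfolding is_isl_def by auto
lemma resid: "a \<in> A \<Longrightarrow> b \<in> A \<Longrightarrow> c \<in> A \<Longrightarrow> isl_le m (m c a) b \<longleftrightarrow> isl_le m c (i a b)"
  using isl unfolding is_isl_def by blast

lemma le_refl: "a \<in> A \<Longrightarrow> isl_le m a a"
  by (simp add: isl_le_def idem)

lemma le_trans: "a \<in> A \<Longrightarrow> b \<in> A \<Longrightarrow> c \<in> A \<Longrightarrow> isl_le m a b \<Longrightarrow> isl_le m b c \<Longrightarrow> isl_le m a c"
  unfolding isl_le_def by (metis assoc)

lemma lb1: "a \<in> A \<Longrightarrow> b \<in> A \<Longrightarrow> isl_le m (m a b) a"
  unfolding isl_le_def by (metis assoc comm idem)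

lemma lb2: "a \<in> A \<Longrightarrow> b \<in> A \<Longrightarrow> isl_le m (m a b) b"
  unfolding isl_le_def by (metis assoc idem)

lemma glb: "a \<in> A \<Longrightarrow> b \<in> A \<Longrightarrow> c \<in> A \<Longrightarrow> isl_le m c a \<Longrightarrow> isl_le m c b \<Longrightarrow> isl_le m c (m a b)"
  unfolding isl_le_def by (metis assoc)

lemma mono: "a \<in> A \<Longrightarrow> b \<in> A \<Longrightarrow> a' \<in> A \<Longrightarrow> b' \<in> A \<Longrightarrow> isl_le m a a' \<Longrightarrow> isl_le m b b'
   \<Longrightarrow> isl_le m (m a b) (m a' b')"
  by (meson cl(1) glb lb1 lb2 le_trans)

lemma mp: "a \<in> A \<Longrightarrow> b \<in> A \<Longrightarrow> isl_le m (m a (i a b)) b"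
  by (metis cl(2) comm le_refl resid)

lemma filt_sub: "isl_filter A m F \<Longrightarrow> x \<in> F \<Longrightarrow> x \<in> A"
  unfolding isl_filter_def by auto
lemma filt_up: "isl_filter A m F \<Longrightarrow> x \<in> F \<Longrightarrow> y \<in> A \<Longrightarrow> isl_le m x y \<Longrightarrow> y \<in> F"
  unfolding isl_filter_def by auto
lemma filt_meet: "isl_filter A m F \<Longrightarrow> x \<in> F \<Longrightarrow> y \<in> F \<Longrightarrow> m x y \<in> F"
  unfolding isl_filter_def by auto

lemma gen_filter:
  assumes F: "isl_filter A m F" and S: "S \<subseteq> A" "S \<noteq> {}" "\<forall>s\<in>S. \<forall>t\<in>S. m s t \<in> S"
  defines "H \<equiv> {y\<in>A. \<exists>c\<in>F. \<exists>s\<in>S. isl_le m (m c s) y}"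
  shows "isl_filter A m H" "F \<subseteq> H" "S \<subseteq> H"
proof -
  have FA: "F \<subseteq> A" using F filt_sub by blast
  obtain s0 where s0: "s0 \<in> S" using S by auto
  obtain c0 where c0: "c0 \<in> F" using F unfolding isl_filter_def by auto
  show FH: "F \<subseteq> H"
  proof
    fix c assume c: "c \<in> F"
    then have "c \<in> A" using FA by auto
    then show "c \<in> H" unfolding H_def using c s0 S lb1[of c s0] by blast
  qed
  show "S \<subseteq> H"
  proof
    fix s assume s: "s \<in> S"
    then have "s \<in> A" using S by auto
    then show "s \<in> H" unfolding H_def using c0 s S FA lb2[of c0 s] by blast
  qed
  show "isl_filter A m H"
    unfolding isl_filter_def
  proof (intro conjI ballI impI)
    show "H \<subseteq> A" unfolding H_def by auto
    show "H \<noteq> {}" using FH c0 by auto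
  next
    fix a b assume a: "a \<in> H" and b: "b \<in> A" and ab: "isl_le m a b"
    from a obtain c s where "a \<in> A" "c \<in> F" "s \<in> S" "isl_le m (m c s) a" unfolding H_def by auto
    then show "b \<in> H" unfolding H_def using b ab le_trans[of "m c s" a b] cl FA S by blast
  next
    fix a b assume a: "a \<in> H" and b: "b \<in> H"
    from a obtain c s where 1: "a \<in> A" "c \<in> F" "s \<in> S" "isl_le m (m c s) a" unfolding H_def by auto
    from b obtain c' s' where 2: "b \<in> A" "c' \<in> F" "s' \<in> S" "isl_le m (m c' s') b" unfolding H_def by auto
    have A1: "c \<in> A" "s \<in> A" "c' \<in> A" "s' \<in> A" using 1 2 FA S by auto
    have "isl_le m (m (m c c') (m s s')) (m c s)"
      using A1 by (intro mono lb1 cl)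
    then have l1: "isl_le m (m (m c c') (m s s')) a"
      using A1 1 by (meson cl(1) le_trans)
    have "isl_le m (m (m c c') (m s s')) (m c' s')"
      using A1 by (intro mono lb2 cl)
    then have l2: "isl_le m (m (m c c') (m s s')) b"
      using A1 2 by (meson cl(1) le_trans)
    have "isl_le m (m (m c c') (m s s')) (m a b)"
      using l1 l2 A1 1 2 by (intro glb cl) auto
    moreover have "m c c' \<in> F" using F 1 2 filt_meet by auto
    moreover have "m s s' \<in> S" using S 1 2 by auto
    ultimately show "m a b \<in> H" unfolding H_def using 1 2 cl by blast
  qed
qed

lemma directed:
  assumes G: "meet_irreducible_filter A m G" and a: "a \<in> A" "a \<notin> G" and b: "b \<in> A" "b \<notin> G"
  shows "\<exists>c\<in>A. c \<notin> G \<and> isl_le m a c \<and> isl_le m b c"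
proof -
  have GF: "isl_filter A m G" using G unfolding meet_irreducible_filter_def by auto
  have GA: "G \<subseteq> A" using GF filt_sub by blast
  define Ga where "Ga = {y\<in>A. \<exists>c\<in>G. \<exists>s\<in>{a}. isl_le m (m c s) y}"
  define Gb where "Gb = {y\<in>A. \<exists>c\<in>G. \<exists>s\<in>{b}. isl_le m (m c s) y}"
  have fa: "isl_filter A m Ga" "G \<subseteq> Ga" "{a} \<subseteq> Ga"
    using gen_filter[OF GF, of "{a}"] a unfolding Ga_def by (auto simp: idem)
  have fb: "isl_filter A m Gb" "G \<subseteq> Gb" "{b} \<subseteq> Gb"
    using gen_filter[OF GF, of "{b}"] b unfolding Gb_def by (auto simp: idem)
  have "Ga \<noteq> G" "Gb \<noteq> G" using fa fb a b by auto
  then have "G \<noteq> Ga \<inter> Gb" using G fa fb unfolding meet_irreducible_filter_def by blast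
  then obtain x where x: "x \<in> Ga" "x \<in> Gb" "x \<notin> G" using fa fb by blast
  then obtain g1 g2 where g: "g1 \<in> G" "g2 \<in> G" "isl_le m (m g1 a) x" "isl_le m (m g2 b) x" "x \<in> A"
    unfolding Ga_def Gb_def by auto
  define g where "g = m g1 g2"
  have gG: "g \<in> G" using g GF filt_meet g_def by auto
  have A1: "g1 \<in> A" "g2 \<in> A" "g \<in> A" using g gG GA by auto
  have "isl_le m (m g a) (m g1 a)" using A1 a mono[of g a g1 a] lb1[of g1 g2] le_refl[of a] g_def by metis
  then have "isl_le m (m g a) x" using A1 a g by (meson cl(1) le_trans)
  then have ca: "isl_le m a (i g x)" using resid A1 a g comm by metis
  have "isl_le m (m g b) (m g2 b)" using A1 b mono[of g b g2 b] lb2[of g1 g2] le_refl[of b] g_def by metis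
  then have "isl_le m (m g b) x" using A1 b g by (meson cl(1) le_trans)
  then have cb: "isl_le m b (i g x)" using resid A1 b g comm by metis
  have "i g x \<notin> G"
  proof
    assume "i g x \<in> G"
    then have "m g (i g x) \<in> G" using gG GF filt_meet by auto
    then show False using filt_up[OF GF _ _ mp[of g x]] A1 g x by auto
  qed
  then show ?thesis using ca cb cl A1 g by blast
qed

end


lemma part2:
  assumes X: "is_poset X leX" and Y: "is_poset Y leY" and p: "partial_positive_pmorphism X leX Y leY p"
  shows "isl_hom (upsets Y leY) (\<inter>) (up_imp Y leY) Y
              (upsets X leX) (\<inter>) (up_imp X leX) X
              (up_map X leX Y p)"
proof -
  have domX: "dom p \<subseteq> X" and ranY: "\<And>x. x \<in> dom p \<Longrightarrow> the (p x) \<in> Y"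
    using p unfolding partial_positive_pmorphism_def partial_order_preserving_def partial_fun_def
    by (auto intro: ranI)
  have op: "\<And>x z. x \<in> dom p \<Longrightarrow> z \<in> dom p \<Longrightarrow> leX x z \<Longrightarrow> leY (the (p x)) (the (p z))"
    using p unfolding partial_positive_pmorphism_def partial_order_preserving_def by auto
  have pos: "\<And>x y. x \<in> dom p \<Longrightarrow> y \<in> Y \<Longrightarrow> leY (the (p x)) y \<Longrightarrow> \<exists>z\<in>dom p. leX x z \<and> y = the (p z)"
    using p unfolding partial_positive_pmorphism_def by auto
  have Xr: "\<And>x. x \<in> X \<Longrightarrow> leX x x" and Xt: "\<And>x y z. x \<in> X \<Longrightarrow> y \<in> X \<Longrightarrow> z \<in> X \<Longrightarrow> leX x y \<Longrightarrow> leX y z \<Longrightarrow> leX x z"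
    using X unfolding is_poset_def by blast+
  have Yr: "\<And>x. x \<in> Y \<Longrightarrow> leY x x" and Yt: "\<And>x y z. x \<in> Y \<Longrightarrow> y \<in> Y \<Longrightarrow> z \<in> Y \<Longrightarrow> leY x y \<Longrightarrow> leY y z \<Longrightarrow> leY x z"
    using Y unfolding is_poset_def by blast+
  have up1: "up_map X leX Y p U \<in> upsets X leX" for U
  proof -
    have "up_map X leX Y p U \<subseteq> X" by (auto simp: up_map_def)
    moreover have "x \<in> up_map X leX Y p U"
      if u: "u \<in> up_map X leX Y p U" "x \<in> X" "leX u x" for u x
    proof (rule ccontr)
      assume "x \<notin> up_map X leX Y p U"
      then obtain s where s: "s \<in> partial_preimage p (Y - U)" "leX x s"
        using u unfolding up_map_def down_set_def by auto
      have "s \<in> X" using s domX unfolding partial_preimage_def by auto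
      then have "leX u s" using Xt[of u x s] u s unfolding up_map_def by auto
      then show False using u s unfolding up_map_def down_set_def by auto
    qed
    ultimately show ?thesis unfolding upsets_def by auto
  qed
  have up2: "up_map X leX Y p (U \<inter> V) = up_map X leX Y p U \<inter> up_map X leX Y p V" for U V
  proof -
    have "partial_preimage p (Y - (U \<inter> V)) = partial_preimage p (Y - U) \<union> partial_preimage p (Y - V)"
      unfolding partial_preimage_def by auto
    moreover have "down_set X leX (S \<union> T) = down_set X leX S \<union> down_set X leX T" for S T
      unfolding down_set_def by auto
    ultimately show ?thesis unfolding up_map_def by auto
  qed
  have up3: "up_map X leX Y p Y = X"
    unfolding up_map_def down_set_def partial_preimage_def by blast
  have up4: "up_map X leX Y p (up_imp Y leY U V) = up_imp X leX (up_map X leX Y p U) (up_map X leX Y p V)"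
    if U: "U \<in> upsets Y leY" and V: "V \<in> upsets Y leY" for U V
  proof -
    have UY: "U \<subseteq> Y" and Uup: "\<And>u y. u \<in> U \<Longrightarrow> y \<in> Y \<Longrightarrow> leY u y \<Longrightarrow> y \<in> U"
      using U unfolding upsets_def by auto
    have e1: "Y - up_imp Y leY U V = down_set Y leY (U - V)"
      unfolding up_imp_def down_set_def by blast
    let ?mU = "up_map X leX Y p U" and ?mV = "up_map X leX Y p V"
    have "down_set X leX (partial_preimage p (down_set Y leY (U - V))) = down_set X leX (?mU - ?mV)"
    proof (rule set_eqI, rule iffI)
      fix x assume "x \<in> down_set X leX (partial_preimage p (down_set Y leY (U - V)))"
      then obtain x' y where x: "x \<in> X" "x' \<in> dom p" "leX x x'" "y \<in> Y" "leY (the (p x')) y" "y \<in> U" "y \<notin> V"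
        using UY unfolding down_set_def partial_preimage_def by force
      obtain z where z: "z \<in> dom p" "leX x' z" "y = the (p z)" using pos[OF x(2) x(4,5)] by auto
      have zX: "z \<in> X" "x' \<in> X" using z x domX by auto
      have "z \<notin> down_set X leX (partial_preimage p (Y - U))"
      proof
        assume "z \<in> down_set X leX (partial_preimage p (Y - U))"
        then obtain w where w: "w \<in> dom p" "the (p w) \<in> Y" "the (p w) \<notin> U" "leX z w"
          unfolding down_set_def partial_preimage_def by auto
        have "leY y (the (p w))" using op[OF z(1) w(1) w(4)] z by simp
        then show False using Uup[OF x(6) w(2)] w by auto
      qed
      then have "z \<in> ?mU" unfolding up_map_def using zX by auto
      moreover have "z \<notin> ?mV"
        unfolding up_map_def down_set_def partial_preimage_def using z zX x ranY Xr by auto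
      ultimately show "x \<in> down_set X leX (?mU - ?mV)"
        unfolding down_set_def using x z zX Xt[of x x' z] by blast
    next
      fix x assume "x \<in> down_set X leX (?mU - ?mV)"
      then obtain z where z: "x \<in> X" "z \<in> ?mU" "z \<notin> ?mV" "leX x z"
        unfolding down_set_def by auto
      have zX: "z \<in> X" using z unfolding up_map_def by auto
      then obtain w where w: "w \<in> dom p" "the (p w) \<in> Y" "the (p w) \<notin> V" "leX z w"
        using z(3) unfolding up_map_def down_set_def partial_preimage_def by auto
      have wX: "w \<in> X" using w domX by auto
      have "the (p w) \<in> U"
        using z(2) w wX unfolding up_map_def down_set_def partial_preimage_def by auto
      then have "w \<in> partial_preimage p (down_set Y leY (U - V))"
        unfolding partial_preimage_def down_set_def using w Yr by auto
      then show "x \<in> down_set X leX (partial_preimage p (down_set Y leY (U - V)))"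
        unfolding down_set_def using z zX wX w Xt[of x z w] by blast
    qed
    then show ?thesis
      unfolding up_imp_def[of X] up_map_def[of X leX Y p "up_imp Y leY U V"] e1
      by (simp add: up_map_def)
  qed
  show ?thesis
    unfolding isl_hom_def using up1 up2 up3 up4 by auto
qed


lemma part1_pos:
  assumes Ai: "is_isl A mA iA oA" and Bi: "is_isl B mB iB oB"
    and h: "isl_hom A mA iA oA B mB iB oB f"
    and F: "meet_irreducible_filter B mB F" and G: "meet_irreducible_filter A mA G"
    and FG: "isl_preimage A f F \<subseteq> G"
  shows "\<exists>H. meet_irreducible_filter B mB H \<and> F \<subseteq> H \<and> isl_preimage A f H = G"
proof -
  interpret a: isl_loc A mA iA oA using Ai by (unfold_locales)
  interpret b: isl_loc B mB iB oB using Bi by (unfold_locales)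
  have fB: "\<And>x. x \<in> A \<Longrightarrow> f x \<in> B" and fm: "\<And>x y. x \<in> A \<Longrightarrow> y \<in> A \<Longrightarrow> f (mA x y) = mB (f x) (f y)"
    and fi: "\<And>x y. x \<in> A \<Longrightarrow> y \<in> A \<Longrightarrow> f (iA x y) = iB (f x) (f y)"
    using h unfolding isl_hom_def by auto
  have fmono: "\<And>x y. x \<in> A \<Longrightarrow> y \<in> A \<Longrightarrow> isl_le mA x y \<Longrightarrow> isl_le mB (f x) (f y)"
    unfolding isl_le_def using fm by metis
  have GF: "isl_filter A mA G" and GA: "G \<noteq> A" and Gsub: "G \<subseteq> A"
    using G a.filt_sub unfolding meet_irreducible_filter_def by blast+
  have FF: "isl_filter B mB F" and Fsub: "F \<subseteq> B"
    using F b.filt_sub unfolding meet_irreducible_filter_def by blast+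
  define D where "D = f ` (A - G)"
  define S0 where "S0 = f ` G"
  define H0 where "H0 = {y\<in>B. \<exists>c\<in>F. \<exists>s\<in>S0. isl_le mB (mB c s) y}"
  have S0: "S0 \<subseteq> B" "S0 \<noteq> {}" "\<forall>s\<in>S0. \<forall>t\<in>S0. mB s t \<in> S0"
  proof -
    show "S0 \<subseteq> B" using Gsub fB unfolding S0_def by auto
    show "S0 \<noteq> {}" using GF unfolding S0_def isl_filter_def by auto
    show "\<forall>s\<in>S0. \<forall>t\<in>S0. mB s t \<in> S0"
    proof (intro ballI)
      fix s t assume "s \<in> S0" "t \<in> S0"
      then obtain g1 g2 where g: "g1 \<in> G" "g2 \<in> G" "s = f g1" "t = f g2" unfolding S0_def by auto
      then have "mB s t = f (mA g1 g2)" using fm[of g1 g2] Gsub by (metis subsetD)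
      moreover have "mA g1 g2 \<in> G" using a.filt_meet[OF GF] g by auto
      ultimately show "mB s t \<in> S0" unfolding S0_def by auto
    qed
  qed
  have H0: "isl_filter B mB H0" "F \<subseteq> H0" "S0 \<subseteq> H0"
    using b.gen_filter[OF FF S0] unfolding H0_def by auto
  have H0D: "H0 \<inter> D = {}"
  proof (rule ccontr)
    assume "H0 \<inter> D \<noteq> {}"
    then obtain c g x where x: "x \<in> A" "x \<notin> G" "c \<in> F" "g \<in> G" "isl_le mB (mB c (f g)) (f x)"
      unfolding H0_def D_def S0_def by auto
    have gA: "g \<in> A" using x Gsub by auto
    have cB: "c \<in> B" using x Fsub by auto
    have "isl_le mB c (iB (f g) (f x))" using b.resid[of "f g" "f x" c] x gA cB fB by auto
    then have "f (iA g x) \<in> F" using b.filt_up[OF FF x(3)] fi gA x fB b.cl by auto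
    then have "iA g x \<in> G" using FG a.cl gA x unfolding isl_preimage_def by auto
    then have "mA g (iA g x) \<in> G" using a.filt_meet[OF GF] x by auto
    then have "x \<in> G" using a.filt_up[OF GF _ _ a.mp[of g x]] gA x by auto
    then show False using x by auto
  qed
  define \<S> where "\<S> = {H. isl_filter B mB H \<and> H0 \<subseteq> H \<and> H \<inter> D = {}}"
  have "\<exists>M\<in>\<S>. \<forall>X\<in>\<S>. M \<subseteq> X \<longrightarrow> X = M"
  proof (rule subset_Zorn_nonempty)
    show "\<S> \<noteq> {}" using H0 H0D unfolding \<S>_def by auto
  next
    fix C assume C: "C \<noteq> {}" "subset.chain \<S> C"
    have CS: "C \<subseteq> \<S>" and ch: "\<forall>X\<in>C. \<forall>Y\<in>C. X \<subseteq> Y \<or> Y \<subseteq> X"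
      using C(2) unfolding subset_chain_def by auto
    have filt: "\<And>K. K \<in> C \<Longrightarrow> isl_filter B mB K" and H0K: "\<And>K. K \<in> C \<Longrightarrow> H0 \<subseteq> K"
      and KD: "\<And>K. K \<in> C \<Longrightarrow> K \<inter> D = {}"
      using CS unfolding \<S>_def by auto
    obtain K0 where K0: "K0 \<in> C" using C by auto
    have "isl_filter B mB (\<Union>C)"
      unfolding isl_filter_def
    proof (intro conjI ballI impI)
      show "\<Union>C \<subseteq> B" using filt b.filt_sub by blast
      show "\<Union>C \<noteq> {}" using K0 filt unfolding isl_filter_def by blast
    next
      fix x y assume "x \<in> \<Union>C" "y \<in> B" "isl_le mB x y"
      then show "y \<in> \<Union>C" using filt b.filt_up by blast
    next
      fix x y assume "x \<in> \<Union>C" "y \<in> \<Union>C"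
      then obtain K L where KL: "K \<in> C" "L \<in> C" "x \<in> K" "y \<in> L" by auto
      show "mB x y \<in> \<Union>C"
      proof (cases "K \<subseteq> L")
        case True
        then show ?thesis using KL filt b.filt_meet by blast
      next
        case False
        then have "L \<subseteq> K" using ch KL by blast
        then show ?thesis using KL filt b.filt_meet by blast
      qed
    qed
    then show "\<Union>C \<in> \<S>" unfolding \<S>_def using K0 H0K KD by blast
  qed
  then obtain M where M: "M \<in> \<S>" and Mmax: "\<And>X. X \<in> \<S> \<Longrightarrow> M \<subseteq> X \<Longrightarrow> X = M" by blast
  have MF: "isl_filter B mB M" and H0M: "H0 \<subseteq> M" and MD: "M \<inter> D = {}"
    using M unfolding \<S>_def by auto
  obtain a0 where a0: "a0 \<in> A" "a0 \<notin> G" using GA Gsub by blast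
  have MB: "M \<noteq> B"
  proof
    assume "M = B"
    then have "f a0 \<in> M" using fB a0 by auto
    then show False using MD a0 unfolding D_def by auto
  qed
  have Mirr: "\<not> (\<exists>K L. isl_filter B mB K \<and> isl_filter B mB L \<and> K \<noteq> M \<and> L \<noteq> M \<and> M = K \<inter> L)"
  proof
    assume "\<exists>K L. isl_filter B mB K \<and> isl_filter B mB L \<and> K \<noteq> M \<and> L \<noteq> M \<and> M = K \<inter> L"
    then obtain K L where KL: "isl_filter B mB K" "isl_filter B mB L" "K \<noteq> M" "L \<noteq> M" "M = K \<inter> L"
      by blast
    have "K \<inter> D \<noteq> {}"
    proof
      assume "K \<inter> D = {}"
      then have "K \<in> \<S>" unfolding \<S>_def using KL H0M by auto
      then show False using Mmax KL by auto
    qed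
    then obtain a1 where a1: "a1 \<in> A" "a1 \<notin> G" "f a1 \<in> K" unfolding D_def by auto
    have "L \<inter> D \<noteq> {}"
    proof
      assume "L \<inter> D = {}"
      then have "L \<in> \<S>" unfolding \<S>_def using KL H0M by auto
      then show False using Mmax KL by auto
    qed
    then obtain a2 where a2: "a2 \<in> A" "a2 \<notin> G" "f a2 \<in> L" unfolding D_def by auto
    obtain c where c: "c \<in> A" "c \<notin> G" "isl_le mA a1 c" "isl_le mA a2 c"
      using a.directed[OF G a1(1,2) a2(1,2)] by auto
    have "f c \<in> K" using b.filt_up[OF KL(1) a1(3)] fB c fmono a1 by auto
    moreover have "f c \<in> L" using b.filt_up[OF KL(2) a2(3)] fB c fmono a2 by auto
    ultimately have "f c \<in> M" using KL by auto
    then show False using MD c unfolding D_def by auto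
  qed
  have "meet_irreducible_filter B mB M"
    unfolding meet_irreducible_filter_def using MF MB Mirr by blast
  moreover have "F \<subseteq> M" using H0 H0M by auto
  moreover have "isl_preimage A f M = G"
  proof
    show "isl_preimage A f M \<subseteq> G"
      using MD unfolding isl_preimage_def D_def by auto
    show "G \<subseteq> isl_preimage A f M"
      using H0 H0M Gsub unfolding isl_preimage_def S0_def by auto
  qed
  ultimately show ?thesis by blast
qed

lemma part1:
  assumes Ai: "is_isl A mA iA oA" and Bi: "is_isl B mB iB oB"
    and h: "isl_hom A mA iA oA B mB iB oB f"
  shows "partial_positive_pmorphism (mi_filters B mB) (\<subseteq>) (mi_filters A mA) (\<subseteq>)
        (dual_map A mA B mB f)"
proof -
  have dom: "dom (dual_map A mA B mB f) = {F. F \<in> mi_filters B mB \<and> isl_preimage A f F \<in> mi_filters A mA}"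
    unfolding dual_map_def dom_def by auto
  have th: "\<And>F. F \<in> dom (dual_map A mA B mB f) \<Longrightarrow> the (dual_map A mA B mB f F) = isl_preimage A f F"
    unfolding dom dual_map_def by auto
  have pf: "partial_fun (mi_filters B mB) (mi_filters A mA) (dual_map A mA B mB f)"
    unfolding partial_fun_def
  proof
    show "dom (dual_map A mA B mB f) \<subseteq> mi_filters B mB" using dom by auto
    show "ran (dual_map A mA B mB f) \<subseteq> mi_filters A mA"
      unfolding ran_def dual_map_def by (auto split: if_splits)
  qed
  have op: "partial_order_preserving (mi_filters B mB) (\<subseteq>) (mi_filters A mA) (\<subseteq>) (dual_map A mA B mB f)"
    unfolding partial_order_preserving_def using pf th unfolding isl_preimage_def by auto
  show ?thesis
    unfolding partial_positive_pmorphism_def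
  proof (intro conjI op ballI impI)
    fix F G assume F: "F \<in> dom (dual_map A mA B mB f)" and G: "G \<in> mi_filters A mA"
      and FG: "the (dual_map A mA B mB f F) \<subseteq> G"
    have "F \<in> mi_filters B mB" using F dom by auto
    then obtain H where H: "meet_irreducible_filter B mB H" "F \<subseteq> H" "isl_preimage A f H = G"
      using part1_pos[OF Ai Bi h, of F G] G FG th[OF F] unfolding mi_filters_def by auto
    then have "H \<in> dom (dual_map A mA B mB f)" using G dom unfolding mi_filters_def by auto
    then show "\<exists>z\<in>dom (dual_map A mA B mB f). F \<subseteq> z \<and> G = the (dual_map A mA B mB f z)"
      using H th by auto
  qed
qed

theorem proposition3p11:
  shows
  "(\<forall>(A :: 'a set) meetA impA oneA (B :: 'b set) meetB impB oneB f.
      is_isl A meetA impA oneA \<longrightarrow> is_isl B meetB impB oneB \<longrightarrow>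
      isl_hom A meetA impA oneA B meetB impB oneB f \<longrightarrow>
      partial_positive_pmorphism (mi_filters B meetB) (\<subseteq>) (mi_filters A meetA) (\<subseteq>)
        (dual_map A meetA B meetB f))
   \<and>
   (\<forall>(X :: 'x set) leX (Y :: 'y set) leY p.
      is_poset X leX \<longrightarrow> is_poset Y leY \<longrightarrow>
      partial_positive_pmorphism X leX Y leY p \<longrightarrow>
      isl_hom (upsets Y leY) (\<inter>) (up_imp Y leY) Y
              (upsets X leX) (\<inter>) (up_imp X leX) X
              (up_map X leX Y p))"
  using part1 part2 by blast

end
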